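(* Let $\Omega=\{1,\ldots,n\}$, $k\in\Omega$, and let $\phi$ be a generalized metric satisfying convexity: for all distributions $p_1,p_2,q_1,q_2$ on a common finite set and $\lambda\in[0,1]$, $\phi(\lambda p_1+(1-\lambda)p_2\|\lambda q_1+(1-\lambda)q_2)\le\lambda\phi(p_1\|q_1)+(1-\lambda)\phi(p_2\|q_2)$. Then for all $\Omega$-point distributions $p_1,p_2,q_1,q_2$ and $\lambda\in[0,1]$, $\widehat{\phi}_k(\lambda p_1+(1-\lambda)p_2\|\lambda q_1+(1-\lambda)q_2)\le\lambda\widehat{\phi}_k(p_1\|q_1)+(1-\lambda)\widehat{\phi}_k(p_2\|q_2)$.
   Context: An $\Omega$-point distribution is a probability vector on $\Omega$. $\phi$ assigns a real number $\phi(p\|q)$ to each pair of probability distributions on the same finite set. $\mathcal P_k(\Omega)$ is the set of partitions of $\Omega$ into exactly $k$ nonempty disjoint cells; for $\rho\in\mathcal P_k(\Omega)$, $\widehat p_\rho(a)=\sum_{i\in a}p(i)$ for $a\in\rho$. The Sketch $\star$-metric is $\widehat{\phi}_k(p\|q)=\max_{\rho\in\mathcal P_k(\Omega)}\phi(\widehat p_\rho\|\widehat q_\rho)$. *)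

theory Defs
  imports Complex_Main "HOL-Library.Disjoint_Sets"
begin

definition prob_dist :: "'a set \<Rightarrow> ('a \<Rightarrow> real) \<Rightarrow> bool" where
  "prob_dist A p \<longleftrightarrow> finite A \<and> (\<forall>i\<in>A. 0 \<le> p i) \<and> sum p A = 1 \<and> (\<forall>i. i \<notin> A \<longrightarrow> p i = 0)"

definition partitions_k :: "'a set \<Rightarrow> nat \<Rightarrow> 'a set set set" where
  "partitions_k \<Omega> k = {\<rho>. partition_on \<Omega> \<rho> \<and> card \<rho> = k}"

definition coarsen :: "'a set set \<Rightarrow> ('a \<Rightarrow> real) \<Rightarrow> ('a set \<Rightarrow> real)" where
  "coarsen \<rho> p = (\<lambda>a. if a \<in> \<rho> then sum p a else 0)"

text \<open>Sketch star-metric. phi A p q is the value of phi for distributions p, q on the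
  finite carrier A.\<close>
definition sketch :: "('a set set \<Rightarrow> ('a set \<Rightarrow> real) \<Rightarrow> ('a set \<Rightarrow> real) \<Rightarrow> real)
    \<Rightarrow> 'a set \<Rightarrow> nat \<Rightarrow> ('a \<Rightarrow> real) \<Rightarrow> ('a \<Rightarrow> real) \<Rightarrow> real" where
  "sketch \<phi> \<Omega> k p q = Max ((\<lambda>\<rho>. \<phi> \<rho> (coarsen \<rho> p) (coarsen \<rho> q)) ` partitions_k \<Omega> k)"

end

theory Submission
  imports Defs
begin

lemma part_finite: "finite \<Omega> \<Longrightarrow> finite (partitions_k \<Omega> k)"
  unfolding partitions_k_def
  by (rule finite_subset[of _ "Pow (Pow \<Omega>)"]) (auto simp: partition_on_def)

lemma coarsen_dist:
  assumes "prob_dist \<Omega> p" "partition_on \<Omega> \<rho>"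
  shows "prob_dist \<rho> (coarsen \<rho> p)"
proof -
  have fin: "finite \<Omega>" using assms(1) by (simp add: prob_dist_def)
  have U: "\<Union>\<rho> = \<Omega>" and dj: "disjoint \<rho>" using assms(2) by (auto simp: partition_on_def)
  have fr: "finite \<rho>" using fin U by (metis finite_UnionD)
  have fa: "\<forall>a\<in>\<rho>. finite a" using fin U by (meson Union_upper finite_subset)
  have "sum (coarsen \<rho> p) \<rho> = sum (sum p) \<rho>" by (simp add: coarsen_def)
  also have "\<dots> = sum p (\<Union>\<rho>)"
    using fa dj by (subst sum.Union_disjoint) (auto simp: disjoint_def)
  also have "\<dots> = 1" using U assms(1) by (simp add: prob_dist_def)
  finally have s: "sum (coarsen \<rho> p) \<rho> = 1" .
  have nn: "\<forall>a\<in>\<rho>. 0 \<le> coarsen \<rho> p a"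
    using assms(1) U by (auto simp: coarsen_def prob_dist_def intro!: sum_nonneg)
  show ?thesis using fr s nn by (auto simp: prob_dist_def coarsen_def)
qed

lemma coarsen_mix: "coarsen \<rho> (\<lambda>x. t * p1 x + (1 - t) * p2 x)
   = (\<lambda>a. t * coarsen \<rho> p1 a + (1 - t) * coarsen \<rho> p2 a)"
  by (auto simp: coarsen_def sum.distrib sum_distrib_left)

theorem lemma6:
  fixes \<phi> :: "nat set set \<Rightarrow> (nat set \<Rightarrow> real) \<Rightarrow> (nat set \<Rightarrow> real) \<Rightarrow> real"
    and n k :: nat and p1 p2 q1 q2 :: "nat \<Rightarrow> real" and t :: real
  assumes convex: "\<And>A P1 P2 Q1 Q2 \<mu>. finite A \<Longrightarrow>
      prob_dist A P1 \<Longrightarrow> prob_dist A P2 \<Longrightarrow> prob_dist A Q1 \<Longrightarrow> prob_dist A Q2 \<Longrightarrow>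
      0 \<le> \<mu> \<Longrightarrow> \<mu> \<le> 1 \<Longrightarrow>
      \<phi> A (\<lambda>x. \<mu> * P1 x + (1 - \<mu>) * P2 x) (\<lambda>x. \<mu> * Q1 x + (1 - \<mu>) * Q2 x)
        \<le> \<mu> * \<phi> A P1 Q1 + (1 - \<mu>) * \<phi> A P2 Q2"
    and k: "k \<in> {1..n}"
    and p1: "prob_dist {1..n} p1" and p2: "prob_dist {1..n} p2"
    and q1: "prob_dist {1..n} q1" and q2: "prob_dist {1..n} q2"
    and lam: "0 \<le> t" "t \<le> 1"
  shows "sketch \<phi> {1..n} k (\<lambda>x. t * p1 x + (1 - t) * p2 x) (\<lambda>x. t * q1 x + (1 - t) * q2 x)
    \<le> t * sketch \<phi> {1..n} k p1 q1 + (1 - t) * sketch \<phi> {1..n} k p2 q2"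
proof (cases "partitions_k {1..n} k = {}")
  case True
  then show ?thesis by (simp add: sketch_def algebra_simps)
next
  case False
  let ?P = "partitions_k {1..n::nat} k"
  have fP: "finite ?P" by (rule part_finite) simp
  let ?f = "\<lambda>\<rho>. \<phi> \<rho> (coarsen \<rho> (\<lambda>x. t * p1 x + (1 - t) * p2 x)) (coarsen \<rho> (\<lambda>x. t * q1 x + (1 - t) * q2 x))"
  obtain \<rho> where r: "\<rho> \<in> ?P" and eq: "sketch \<phi> {1..n} k (\<lambda>x. t * p1 x + (1 - t) * p2 x) (\<lambda>x. t * q1 x + (1 - t) * q2 x) = ?f \<rho>"
  proof -
    have "Max (?f ` ?P) \<in> ?f ` ?P" using fP False by (intro Max_in) auto
    then obtain \<rho> where "\<rho> \<in> ?P" "Max (?f ` ?P) = ?f \<rho>" by blast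
    then show ?thesis using that unfolding sketch_def by blast
  qed
  have po: "partition_on {1..n} \<rho>" using r by (simp add: partitions_k_def)
  have fr: "finite \<rho>" using coarsen_dist[OF p1 po] by (simp add: prob_dist_def)
  have "?f \<rho> \<le> t * \<phi> \<rho> (coarsen \<rho> p1) (coarsen \<rho> q1) + (1 - t) * \<phi> \<rho> (coarsen \<rho> p2) (coarsen \<rho> q2)"
    unfolding coarsen_mix
    by (rule convex[OF fr coarsen_dist[OF p1 po] coarsen_dist[OF p2 po] coarsen_dist[OF q1 po] coarsen_dist[OF q2 po] lam])
  also have "\<dots> \<le> t * sketch \<phi> {1..n} k p1 q1 + (1 - t) * sketch \<phi> {1..n} k p2 q2"
    unfolding sketch_def
    by (intro add_mono mult_left_mono Max_ge) (use fP r lam in auto)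
  finally show ?thesis using eq by simp
qed

end
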